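(* Suppose $f:2^E\times O^E\to\mathbb{R}_{\ge0}$ satisfies: (1) for every $e\in E$ and every partial realization $\psi$ (with positive probability) with $e\notin\mathrm{dom}(\psi)$, $O(e,\psi)=O(e,\emptyset)$; (2) $f$ is pointwise submodular and pointwise monotone with respect to $p(\phi)$; (3) $f$ satisfies minimal dependency. Then $f$ is worst-case monotone and worst-case submodular with respect to $p(\phi)$ (and satisfies minimal dependency).
   Context: Setting. $E$ is a finite set of $n$ items and $O$ a finite set of states. A realization is a function $\phi:E\to O$; $p$ is a probability distribution (prior) on the set of all realizations, $\Phi$ denotes a random realization with law $p$, and $U^+=\{\phi: p(\phi)>0\}$. A partial realization is a function $\psi:S\to O$ with $S\subseteq E$, $\mathrm{dom}(\psi)=S$; it is identified with the set of pairs $\{(e,\psi(e)):e\in S\}$, so $\psi\subseteq\psi'$ means $\mathrm{dom}(\psi)\subseteq\mathrm{dom}(\psi')$ and they agree on $\mathrm{dom}(\psi)$. A realization $\phi$ is consistent with $\psi$, written $\phi\sim\psi$, if it agrees with $\psi$ on $\mathrm{dom}(\psi)$. Only partial realizations with $\Pr[\Phi\sim\psi]>0$ are considered, and $p(\phi\mid\psi)=\Pr[\Phi=\phi\mid\Phi\sim\psi]$. For $S\subseteq E$ and a partial realization $\psi$, $f(S,\psi)=\mathbb{E}[f(S,\Phi)\mid\Phi\sim\psi]$. For $e\notin\mathrm{dom}(\psi)$, let $O(e,\psi)=\{o\in O:\exists\phi\text{ with }p(\phi\mid\psi)>0,\ \phi(e)=o\}$ and define the worst-case marginal utility $f_{wc}(e\mid\psi)=\min_{o\in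 O(e,\psi)}\{f(\mathrm{dom}(\psi)\cup\{e\},\psi\cup\{(e,o)\})-f(\mathrm{dom}(\psi),\psi)\}$. $f$ is worst-case submodular if $f_{wc}(e\mid\psi)\ge f_{wc}(e\mid\psi')$ for all partial realizations $\psi\subseteq\psi'$ and all $e\in E\setminus\mathrm{dom}(\psi')$; it is worst-case monotone if $f_{wc}(e\mid\psi)\ge0$ for all $\psi$ and $e\notin\mathrm{dom}(\psi)$. $f$ satisfies minimal dependency if $f(\mathrm{dom}(\psi),\psi)=f(\mathrm{dom}(\psi),\phi)$ for every partial realization $\psi$ and every $\phi\in U^+$ with $\phi\sim\psi$. $f$ is pointwise submodular (resp. pointwise monotone) if for every $\phi\in U^+$ the set function $S\mapsto f(S,\phi)$ is submodular (resp. monotone nondecreasing). *)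

theory Defs
  imports Complex_Main
begin

text \<open>Items are the finite type 'e (so E = UNIV), states the finite type 'o.
 A realization is a total function 'e => 'o, a prior is p :: ('e => 'o) => real,
 a partial realization is a map 'e => 'o option (dom psi is its domain).
 f :: 'e set => ('e => 'o) => real is the utility.\<close>

definition prior :: "(('e::finite \<Rightarrow> 'o::finite) \<Rightarrow> real) \<Rightarrow> bool" where
  "prior p \<longleftrightarrow> (\<forall>\<phi>. 0 \<le> p \<phi>) \<and> (\<Sum>\<phi>\<in>UNIV. p \<phi>) = 1"

definition consistent :: "('e \<Rightarrow> 'o) \<Rightarrow> ('e \<rightharpoonup> 'o) \<Rightarrow> bool" where
  "consistent \<phi> \<psi> \<longleftrightarrow> (\<forall>e\<in>dom \<psi>. \<psi> e = Some (\<phi> e))"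

definition prob_cons :: "(('e::finite \<Rightarrow> 'o::finite) \<Rightarrow> real) \<Rightarrow> ('e \<rightharpoonup> 'o) \<Rightarrow> real" where
  "prob_cons p \<psi> = (\<Sum>\<phi>\<in>{\<phi>. consistent \<phi> \<psi>}. p \<phi>)"

definition cond_prob :: "(('e::finite \<Rightarrow> 'o::finite) \<Rightarrow> real) \<Rightarrow> ('e \<Rightarrow> 'o) \<Rightarrow> ('e \<rightharpoonup> 'o) \<Rightarrow> real" where
  "cond_prob p \<phi> \<psi> = (if consistent \<phi> \<psi> then p \<phi> / prob_cons p \<psi> else 0)"

definition f_partial :: "(('e::finite \<Rightarrow> 'o::finite) \<Rightarrow> real) \<Rightarrow> ('e set \<Rightarrow> ('e \<Rightarrow> 'o) \<Rightarrow> real)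
    \<Rightarrow> 'e set \<Rightarrow> ('e \<rightharpoonup> 'o) \<Rightarrow> real" where
  "f_partial p f S \<psi> = (\<Sum>\<phi>\<in>UNIV. cond_prob p \<phi> \<psi> * f S \<phi>)"

definition states_of :: "(('e::finite \<Rightarrow> 'o::finite) \<Rightarrow> real) \<Rightarrow> 'e \<Rightarrow> ('e \<rightharpoonup> 'o) \<Rightarrow> 'o set" where
  "states_of p e \<psi> = {s. \<exists>\<phi>. cond_prob p \<phi> \<psi> > 0 \<and> \<phi> e = s}"

definition f_wc :: "(('e::finite \<Rightarrow> 'o::finite) \<Rightarrow> real) \<Rightarrow> ('e set \<Rightarrow> ('e \<Rightarrow> 'o) \<Rightarrow> real)
    \<Rightarrow> 'e \<Rightarrow> ('e \<rightharpoonup> 'o) \<Rightarrow> real" where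
  "f_wc p f e \<psi> = Min ((\<lambda>s. f_partial p f (dom \<psi> \<union> {e}) (\<psi>(e \<mapsto> s)) - f_partial p f (dom \<psi>) \<psi>)
                       ` states_of p e \<psi>)"

definition worst_case_submodular where
  "worst_case_submodular p f \<longleftrightarrow>
     (\<forall>\<psi> \<psi>' e. prob_cons p \<psi> > 0 \<longrightarrow> prob_cons p \<psi>' > 0 \<longrightarrow> \<psi> \<subseteq>\<^sub>m \<psi>' \<longrightarrow> e \<notin> dom \<psi>'
        \<longrightarrow> f_wc p f e \<psi> \<ge> f_wc p f e \<psi>')"

definition worst_case_monotone where
  "worst_case_monotone p f \<longleftrightarrow>
     (\<forall>\<psi> e. prob_cons p \<psi> > 0 \<longrightarrow> e \<notin> dom \<psi> \<longrightarrow> f_wc p f e \<psi> \<ge> 0)"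

definition minimal_dependency where
  "minimal_dependency p f \<longleftrightarrow>
     (\<forall>\<psi> \<phi>. prob_cons p \<psi> > 0 \<longrightarrow> p \<phi> > 0 \<longrightarrow> consistent \<phi> \<psi>
        \<longrightarrow> f_partial p f (dom \<psi>) \<psi> = f (dom \<psi>) \<phi>)"

definition pointwise_submodular where
  "pointwise_submodular p f \<longleftrightarrow>
     (\<forall>\<phi>. p \<phi> > 0 \<longrightarrow> (\<forall>A B e. A \<subseteq> B \<longrightarrow> e \<notin> B \<longrightarrow>
        f (A \<union> {e}) \<phi> - f A \<phi> \<ge> f (B \<union> {e}) \<phi> - f B \<phi>))"

definition pointwise_monotone where
  "pointwise_monotone p f \<longleftrightarrow>
     (\<forall>\<phi>. p \<phi> > 0 \<longrightarrow> (\<forall>A B. A \<subseteq> B \<longrightarrow> f A \<phi> \<le> f B \<phi>))"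

end

theory Submission
  imports Defs
begin

lemma pc_pos:
  assumes "prior p" "p \<phi> > 0" "consistent \<phi> \<psi>"
  shows "prob_cons p \<psi> > 0"
proof -
  have "p \<phi> \<le> prob_cons p \<psi>" unfolding prob_cons_def
    by (rule member_le_sum) (use assms in \<open>auto simp: prior_def\<close>)
  thus ?thesis using assms by linarith
qed

lemma states_wit:
  assumes "prob_cons p \<psi> > 0" "s \<in> states_of p e \<psi>"
  shows "\<exists>\<phi>. p \<phi> > 0 \<and> consistent \<phi> \<psi> \<and> \<phi> e = s"
proof -
  obtain \<phi> where "cond_prob p \<phi> \<psi> > 0" "\<phi> e = s" using assms(2) by (auto simp: states_of_def)
  thus ?thesis using assms(1)
    by (auto simp: cond_prob_def split: if_splits simp: zero_less_divide_iff)
qed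

lemma states_ne:
  assumes "prob_cons p \<psi> > 0"
  shows "states_of p e \<psi> \<noteq> {}"
proof -
  have "\<exists>\<phi>. consistent \<phi> \<psi> \<and> p \<phi> > 0"
  proof (rule ccontr)
    assume "\<not> ?thesis"
    hence "prob_cons p \<psi> \<le> 0" unfolding prob_cons_def by (intro sum_nonpos) auto
    thus False using assms by simp
  qed
  then obtain \<phi> where "consistent \<phi> \<psi>" "p \<phi> > 0" by blast
  hence "cond_prob p \<phi> \<psi> > 0" using assms by (simp add: cond_prob_def)
  thus ?thesis by (auto simp: states_of_def)
qed

lemma marg_eq:
  assumes "prior p" "minimal_dependency p f" "p \<phi> > 0" "consistent \<phi> \<psi>"
  shows "f_partial p f (dom \<psi> \<union> {e}) (\<psi>(e \<mapsto> \<phi> e)) - f_partial p f (dom \<psi>) \<psi>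
        = f (dom \<psi> \<union> {e}) \<phi> - f (dom \<psi>) \<phi>"
proof -
  have c2: "consistent \<phi> (\<psi>(e \<mapsto> \<phi> e))" using assms(4) by (auto simp: consistent_def)
  have d: "dom (\<psi>(e \<mapsto> \<phi> e)) = dom \<psi> \<union> {e}" by auto
  have "f_partial p f (dom (\<psi>(e \<mapsto> \<phi> e))) (\<psi>(e \<mapsto> \<phi> e)) = f (dom (\<psi>(e \<mapsto> \<phi> e))) \<phi>"
    using assms(2) pc_pos[OF assms(1,3) c2] assms(3) c2 unfolding minimal_dependency_def by blast
  moreover have "f_partial p f (dom \<psi>) \<psi> = f (dom \<psi>) \<phi>"
    using assms(2) pc_pos[OF assms(1,3,4)] assms(3,4) unfolding minimal_dependency_def by blast
  ultimately show ?thesis using d by simp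
qed

theorem proposition2:
  fixes p :: "('e::finite \<Rightarrow> 'o::finite) \<Rightarrow> real"
    and f :: "'e set \<Rightarrow> ('e \<Rightarrow> 'o) \<Rightarrow> real"
  assumes "prior p"
    and "\<forall>S \<phi>. f S \<phi> \<ge> 0"
    and "\<forall>e \<psi>. prob_cons p \<psi> > 0 \<longrightarrow> e \<notin> dom \<psi> \<longrightarrow> states_of p e \<psi> = states_of p e Map.empty"
    and "pointwise_submodular p f" and "pointwise_monotone p f"
    and "minimal_dependency p f"
  shows "worst_case_monotone p f \<and> worst_case_submodular p f \<and> minimal_dependency p f"
proof (intro conjI)
  show "minimal_dependency p f" by fact
  show "worst_case_monotone p f"
    unfolding worst_case_monotone_def
  proof (intro allI impI)
    fix \<psi> e assume pos: "prob_cons p \<psi> > 0" and e: "e \<notin> dom \<psi>"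
    show "f_wc p f e \<psi> \<ge> 0" unfolding f_wc_def
    proof (subst Min_ge_iff)
      show "finite ((\<lambda>s. f_partial p f (dom \<psi> \<union> {e}) (\<psi>(e \<mapsto> s)) - f_partial p f (dom \<psi>) \<psi>) ` states_of p e \<psi>)" by simp
      show "(\<lambda>s. f_partial p f (dom \<psi> \<union> {e}) (\<psi>(e \<mapsto> s)) - f_partial p f (dom \<psi>) \<psi>) ` states_of p e \<psi> \<noteq> {}"
        using states_ne[OF pos] by simp
      show "\<forall>a\<in>(\<lambda>s. f_partial p f (dom \<psi> \<union> {e}) (\<psi>(e \<mapsto> s)) - f_partial p f (dom \<psi>) \<psi>) ` states_of p e \<psi>. 0 \<le> a"
      proof
        fix a assume "a \<in> (\<lambda>s. f_partial p f (dom \<psi> \<union> {e}) (\<psi>(e \<mapsto> s)) - f_partial p f (dom \<psi>) \<psi>) ` states_of p e \<psi>"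
        then obtain s where s: "s \<in> states_of p e \<psi>"
          and a: "a = f_partial p f (dom \<psi> \<union> {e}) (\<psi>(e \<mapsto> s)) - f_partial p f (dom \<psi>) \<psi>" by blast
        obtain \<phi> where \<phi>: "p \<phi> > 0" "consistent \<phi> \<psi>" "\<phi> e = s" using states_wit[OF pos s] by blast
        have "a = f (dom \<psi> \<union> {e}) \<phi> - f (dom \<psi>) \<phi>"
          using marg_eq[OF assms(1,6) \<phi>(1,2), of e] a \<phi>(3) by simp
        moreover have "f (dom \<psi>) \<phi> \<le> f (dom \<psi> \<union> {e}) \<phi>"
          using assms(5) \<phi>(1) unfolding pointwise_monotone_def by blast
        ultimately show "0 \<le> a" by simp
      qed
    qed
  qed
  show "worst_case_submodular p f"
    unfolding worst_case_submodular_def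
  proof (intro allI impI)
    fix \<psi> \<psi>' e assume pos: "prob_cons p \<psi> > 0" and pos': "prob_cons p \<psi>' > 0"
      and le: "\<psi> \<subseteq>\<^sub>m \<psi>'" and e': "e \<notin> dom \<psi>'"
    have e: "e \<notin> dom \<psi>" using le e' by (metis domD domIff map_le_def)
    have dsub: "dom \<psi> \<subseteq> dom \<psi>'" using le by (simp add: map_le_implies_dom_le)
    have St: "states_of p e \<psi> = states_of p e \<psi>'" using assms(3) pos pos' e e' by metis
    define g where "g = (\<lambda>s. f_partial p f (dom \<psi> \<union> {e}) (\<psi>(e \<mapsto> s)) - f_partial p f (dom \<psi>) \<psi>)"
    define g' where "g' = (\<lambda>s. f_partial p f (dom \<psi>' \<union> {e}) (\<psi>'(e \<mapsto> s)) - f_partial p f (dom \<psi>') \<psi>')"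
    have pw: "g' s \<le> g s" if s: "s \<in> states_of p e \<psi>'" for s
    proof -
      obtain \<phi> where \<phi>: "p \<phi> > 0" "consistent \<phi> \<psi>'" "\<phi> e = s" using states_wit[OF pos' s] by blast
      have c: "consistent \<phi> \<psi>" using \<phi>(2) le
        unfolding consistent_def
      proof (intro ballI)
        fix a assume a: "a \<in> dom \<psi>"
        hence "\<psi> a = \<psi>' a" using le by (simp add: map_le_def)
        moreover have "a \<in> dom \<psi>'" using a dsub by blast
        ultimately show "\<psi> a = Some (\<phi> a)" using \<phi>(2) by (simp add: consistent_def)
      qed
      have "g s = f (dom \<psi> \<union> {e}) \<phi> - f (dom \<psi>) \<phi>"
        using marg_eq[OF assms(1,6) \<phi>(1) c, of e] \<phi>(3) by (simp add: g_def)
      moreover have "g' s = f (dom \<psi>' \<union> {e}) \<phi> - f (dom \<psi>') \<phi>"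
        using marg_eq[OF assms(1,6) \<phi>(1,2), of e] \<phi>(3) by (simp add: g'_def)
      moreover have "f (dom \<psi> \<union> {e}) \<phi> - f (dom \<psi>) \<phi> \<ge> f (dom \<psi>' \<union> {e}) \<phi> - f (dom \<psi>') \<phi>"
        using assms(4) \<phi>(1) dsub e' unfolding pointwise_submodular_def by blast
      ultimately show ?thesis by simp
    qed
    have ne: "states_of p e \<psi>' \<noteq> {}" using states_ne[OF pos'] .
    have "Min (g' ` states_of p e \<psi>') \<le> Min (g ` states_of p e \<psi>')"
    proof (subst Min_le_iff)
      show "finite (g' ` states_of p e \<psi>')" by simp
      show "g' ` states_of p e \<psi>' \<noteq> {}" using ne by simp
      obtain s where s: "s \<in> states_of p e \<psi>'" "g s = Min (g ` states_of p e \<psi>')"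
        proof -
        have "Min (g ` states_of p e \<psi>') \<in> g ` states_of p e \<psi>'"
          using ne by (intro Min_in) auto
        then obtain s0 where "s0 \<in> states_of p e \<psi>'" "Min (g ` states_of p e \<psi>') = g s0" by (rule imageE)
        thus ?thesis using that by simp
      qed
      show "\<exists>a\<in>g' ` states_of p e \<psi>'. a \<le> Min (g ` states_of p e \<psi>')"
        using pw[OF s(1)] s by force
    qed
    thus "f_wc p f e \<psi>' \<le> f_wc p f e \<psi>"
      unfolding f_wc_def g_def[symmetric] g'_def[symmetric] St .
  qed
qed

end
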